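(* Let $q\ge2$ be a prime power, $d\ge6$ and $j=1$. Then $|Q_1(i)|>|Q_1(i+1)|$ for all $1\le i\le d-1$. Moreover, for every $1\le i\le d$, $Q_1(i)$ has the same sign as $T_{h_{\max}}(i,1)$, where $h_{\max}=\min\{1,d-i\}$.
   Context: Let $b=-q$. For integers $m\ge0$ and $l$, ${m\brack l}_b=\prod_{t=1}^{l}\frac{b^{m-t+1}-1}{b^t-1}$ for $l\ge0$ and $0$ for $l<0$. For $0\le i,j\le d$, $$Q_j(i)=\sum_{h=0}^{\min\{j,d-i\}}(-1)^j(-q)^{\binom{j-h}{2}+hd}{d-h\brack d-j}_b{d-i\brack h}_b,$$ the eigenvalues of the Hermitian forms graph $Q_q(d,j)$ (vertices: $d\times d$ Hermitian matrices over $\mathbb F_{q^2}$, adjacent iff their difference has rank $j$). $T_h(i,j)$ denotes the $h$-th summand (including the factor $(-1)^j$), for $0\le h\le\min\{j,d-i\}$. *)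

theory Defs
  imports Complex_Main "HOL-Computational_Algebra.Primes"
begin

definition prime_power :: "nat \<Rightarrow> bool" where
  "prime_power q \<longleftrightarrow> (\<exists>p k. prime p \<and> k \<ge> 1 \<and> q = p ^ k)"

text \<open>Gaussian binomial with base b: product over t = 1..l of (b^(m-t+1)-1)/(b^t-1) for l >= 0,
  and 0 for l < 0. The exponent m+1-t (natural subtraction) equals m-t+1 for t <= m+1;
  for larger t a factor with exponent 0 (t = m+1) already makes the product 0.\<close>
definition gbin :: "real \<Rightarrow> nat \<Rightarrow> int \<Rightarrow> real" where
  "gbin b m l = (if l < 0 then 0
     else (\<Prod>t\<in>{1..nat l}. (b ^ (m + 1 - t) - 1) / (b ^ t - 1)))"

definition Tsum :: "nat \<Rightarrow> nat \<Rightarrow> nat \<Rightarrow> nat \<Rightarrow> nat \<Rightarrow> real" where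
  "Tsum q d h i j = (-1) ^ j * (- real q) ^ (((j - h) choose 2) + h * d)
      * gbin (- real q) (d - h) (int (d - j)) * gbin (- real q) (d - i) (int h)"

definition Qeig :: "nat \<Rightarrow> nat \<Rightarrow> nat \<Rightarrow> nat \<Rightarrow> real" where
  "Qeig q d j i = (\<Sum>h = 0..min j (d - i). Tsum q d h i j)"

end

theory Submission
  imports Defs
begin

lemma pw_ne1:
  fixes b :: real
  assumes "\<bar>b\<bar> \<ge> 2" "t \<ge> 1"
  shows "b ^ t \<noteq> 1"
proof -
  have "\<bar>b\<bar> ^ t \<ge> \<bar>b\<bar> ^ 1" using assms by (intro power_increasing) auto
  then have "\<bar>b ^ t\<bar> \<ge> 2" using assms by (simp add: power_abs)
  then show ?thesis by auto
qed

lemma tele: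
  fixes b :: real
  shows "(\<Prod>t\<in>{1..n}. (b^(t+1)-1)) * (b-1) = (\<Prod>t\<in>{1..n}. (b^t-1)) * (b^(n+1)-1)"
proof (induction n)
  case 0 then show ?case by simp
next
  case (Suc n)
  have "(\<Prod>t\<in>{1..Suc n}. (b^(t+1)-1)) * (b-1) = ((\<Prod>t\<in>{1..n}. (b^(t+1)-1)) * (b-1)) * (b^(n+2)-1)"
    by (simp add: prod.cl_ivl_Suc)
  also have "\<dots> = (\<Prod>t\<in>{1..n}. (b^t-1)) * (b^(n+1)-1) * (b^(n+2)-1)" using Suc by simp
  also have "\<dots> = (\<Prod>t\<in>{1..Suc n}. (b^t-1)) * (b^(Suc n+1)-1)"
    by (simp add: prod.cl_ivl_Suc)
  finally show ?case .
qed

lemma prod_nz: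
  fixes b :: real
  assumes "\<bar>b\<bar> \<ge> 2"
  shows "(\<Prod>t\<in>{1..n}. (b^t-1)) \<noteq> 0"
  using pw_ne1[OF assms] by (simp add: prod_zero_iff)

lemma gbin_top:
  fixes b :: real
  assumes "\<bar>b\<bar> \<ge> 2"
  shows "gbin b (n+1) (int n) = (b^(n+1)-1)/(b-1)"
proof -
  have b1: "b - 1 \<noteq> 0" using assms by auto
  have "gbin b (n+1) (int n) = (\<Prod>t\<in>{1..n}. (b^(n+2-t)-1)) / (\<Prod>t\<in>{1..n}. (b^t-1))"
    by (simp add: gbin_def prod_dividef)
  also have "(\<Prod>t\<in>{1..n}. (b^(n+2-t)-1)) = (\<Prod>t\<in>{1..n}. (b^(n+2-(n+1-t))-1))"
    by (rule prod.atLeastAtMost_rev)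
  also have "\<dots> = (\<Prod>t\<in>{1..n}. (b^(t+1)-1))"
    by (rule prod.cong) auto
  finally have g: "gbin b (n+1) (int n) = (\<Prod>t\<in>{1..n}. (b^(t+1)-1)) / (\<Prod>t\<in>{1..n}. (b^t-1))" .
  have D: "(\<Prod>t\<in>{1..n}. (b^t-1)) \<noteq> 0" by (rule prod_nz[OF assms])
  show ?thesis unfolding g using tele[of b n] D b1
    by (simp add: frac_eq_eq mult.commute)
qed

lemma gbin_diag:
  fixes b :: real
  assumes "\<bar>b\<bar> \<ge> 2"
  shows "gbin b n (int n) = 1"
proof -
  have "gbin b n (int n) = (\<Prod>t\<in>{1..n}. (b^(n+1-t)-1)) / (\<Prod>t\<in>{1..n}. (b^t-1))"
    by (simp add: gbin_def prod_dividef)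
  also have "(\<Prod>t\<in>{1..n}. (b^(n+1-t)-1)) = (\<Prod>t\<in>{1..n}. (b^(n+1-(n+1-t))-1))"
    by (rule prod.atLeastAtMost_rev)
  also have "\<dots> = (\<Prod>t\<in>{1..n}. (b^t-1))"
    by (rule prod.cong) auto
  finally show ?thesis using prod_nz[OF assms, of n] by simp
qed

lemma gbin_one:
  fixes b :: real
  shows "gbin b m 1 = (b^m-1)/(b-1)"
  by (simp add: gbin_def)

lemma gbin_zero:
  fixes b :: real
  shows "gbin b m 0 = 1"
  by (simp add: gbin_def)

lemma L1: "(c::real) \<noteq> 0 \<Longrightarrow> (1-y)/c + (-(y*((z-1)/c))) = (1 - y*z)/c" by (simp add: field_simps)
lemma L2: "(1-(x::real))/(-r) = (x-1)/r" by (metis minus_diff_eq minus_divide_left divide_minus_right)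

lemma Qclosed:
  fixes q d i :: nat
  assumes q: "q \<ge> 2" and i: "1 \<le> i" "i \<le> d"
  shows "Qeig q d 1 i = ((- real q)^(2*d-i) - 1) / (real q + 1)"
proof -
  define b where "b = - real q"
  have ab: "\<bar>b\<bar> \<ge> 2" using q by (simp add: b_def)
  have b1: "b - 1 = - (real q + 1)" by (simp add: b_def)
  have bn: "b - 1 \<noteq> 0" using b1 by simp
  have dd: "d = (d-1) + 1" using i by simp
  have T0: "Tsum q d 0 i 1 = (1 - b^d)/(b-1)"
  proof -
    have "gbin b d (int (d-1)) = (b^d-1)/(b-1)"
      using gbin_top[OF ab, of "d-1"] dd by simp
    show ?thesis using \<open>gbin b d (int (d-1)) = (b^d-1)/(b-1)\<close>
      by (simp add: Tsum_def b_def[symmetric] gbin_zero numeral_2_eq_2)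
  qed
  show ?thesis
  proof (cases "i = d")
    case True
    then have "Qeig q d 1 i = Tsum q d 0 i 1" by (simp add: Qeig_def)
    also have "\<dots> = (b^d - 1)/(real q + 1)" unfolding T0 b1 by (rule L2)
    moreover have "2*d - i = d" using True by simp
    ultimately show ?thesis by (simp add: b_def)
  next
    case False
    then have m: "min 1 (d - i) = 1" using i by simp
    have T1: "Tsum q d 1 i 1 = - (b^d * ((b^(d-i) - 1)/(b-1)))"
      using gbin_diag[OF ab, of "d-1"] dd
      by (simp add: Tsum_def b_def[symmetric] gbin_one of_nat_diff numeral_2_eq_2)
    have "Qeig q d 1 i = Tsum q d 0 i 1 + Tsum q d 1 i 1"
      unfolding Qeig_def m by (simp add: atLeast0_atMost_Suc)
    also have "\<dots> = (1 - b^d * b^(d-i))/(b-1)" unfolding T0 T1 using bn by (rule L1)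
    also have "b^d * b^(d-i) = b^(2*d-i)" using i
      by (metis add_diff_assoc mult_2 power_add)
    also have "(1 - b^(2*d-i))/(b-1) = (b^(2*d-i) - 1)/(real q + 1)" unfolding b1 by (rule L2)
    finally show ?thesis by (simp add: b_def)
  qed
qed

lemma T1closed:
  fixes q d i :: nat
  assumes q: "q \<ge> 2" and i: "1 \<le> i" "i < d"
  shows "Tsum q d 1 i 1 = (- real q)^d * ((- real q)^(d-i) - 1) / (real q + 1)"
proof -
  define b where "b = - real q"
  have ab: "\<bar>b\<bar> \<ge> 2" using q by (simp add: b_def)
  have b1: "b - 1 = - (real q + 1)" by (simp add: b_def)
  have dd: "d = (d-1) + 1" using i by simp
  have T1: "Tsum q d 1 i 1 = - (b^d * ((b^(d-i) - 1)/(b-1)))"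
    using gbin_diag[OF ab, of "d-1"] dd
    by (simp add: Tsum_def b_def[symmetric] gbin_one of_nat_diff numeral_2_eq_2)
  show ?thesis by (simp only: T1 b1 divide_minus_right minus_minus times_divide_eq_right, simp add: b_def)
qed

lemma T0closed:
  fixes q d :: nat
  assumes q: "q \<ge> 2" and d: "1 \<le> d"
  shows "Tsum q d 0 d 1 = ((- real q)^d - 1) / (real q + 1)"
  using Qclosed[OF q d order.refl] by (simp add: Qeig_def mult_2)

lemma sgn_m1:
  fixes b :: real
  assumes "\<bar>b\<bar> \<ge> 2" "m \<ge> 1"
  shows "sgn (b^m - 1) = sgn (b^m)"
proof -
  have "\<bar>b\<bar> ^ m \<ge> \<bar>b\<bar> ^ 1" using assms by (intro power_increasing) auto
  then have "\<bar>b ^ m\<bar> \<ge> 2" using assms by (simp add: power_abs)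
  then have "b^m \<ge> 2 \<or> b^m \<le> -2" by linarith
  then show ?thesis
  proof
    assume h: "b^m \<ge> 2"
    then have "b^m - 1 > 0" "b^m > 0" by linarith+
    then show ?thesis by (metis sgn_pos)
  next
    assume h: "b^m \<le> -2"
    then have "b^m - 1 < 0" "b^m < 0" by linarith+
    then show ?thesis by (metis sgn_neg)
  qed
qed

theorem lemma5p1:
  fixes q d :: nat
  assumes "prime_power q" and "q \<ge> 2" and "d \<ge> 6"
  shows "(\<forall>i. 1 \<le> i \<and> i \<le> d - 1 \<longrightarrow> \<bar>Qeig q d 1 i\<bar> > \<bar>Qeig q d 1 (i + 1)\<bar>)
       \<and> (\<forall>i. 1 \<le> i \<and> i \<le> d \<longrightarrow> sgn (Qeig q d 1 i) = sgn (Tsum q d (min 1 (d - i)) i 1))"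
proof (intro conjI allI impI)
  define b where "b = - real q"
  have ab: "\<bar>b\<bar> \<ge> 2" using assms by (simp add: b_def)
  have qp: "real q + 1 > 0" by simp
  {
    fix i assume i: "1 \<le> i \<and> i \<le> d - 1"
    define n where "n = 2*d - i - 1"
    have n6: "n \<ge> 6" using i assms unfolding n_def by linarith
    have e1: "2*d - i = n + 1" and e2: "2*d - (i+1) = n" using i assms by (auto simp: n_def)
    have id: "i \<le> d" "i + 1 \<le> d" using i assms by linarith+
    have Qi: "Qeig q d 1 i = (b^(n+1) - 1) / (real q + 1)"
      using Qclosed[of q i d] i id assms e1 by (simp add: b_def)
    have Qi1: "Qeig q d 1 (i+1) = (b^n - 1) / (real q + 1)"
      using Qclosed[of q "i+1" d] i id assms e2 by (simp add: b_def)
    have qq: "real q ^ n \<ge> real q ^ 6" using n6 assms by (intro power_increasing) auto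
    have q6: "real q ^ 6 \<ge> 2 ^ 6" using assms by (intro power_mono) auto
    have ak: "\<And>k. \<bar>b^k\<bar> = real q ^ k" by (simp add: b_def power_abs)
    have A: "\<bar>b^(n+1) - 1\<bar> \<ge> real q ^ (n+1) - 1"
      using abs_triangle_ineq2[of "b^(n+1)" 1] ak[of "n+1"] by linarith
    have B: "\<bar>b^n - 1\<bar> \<le> real q ^ n + 1"
      using abs_triangle_ineq4[of "b^n" 1] ak[of n] by linarith
    have C: "real q ^ (n+1) = real q * real q ^ n" by simp
    have "real q * real q ^ n \<ge> 2 * real q ^ n" using assms by (intro mult_right_mono) auto
    moreover have "(2::real)^6 = 64" by simp
    ultimately have "\<bar>b^(n+1) - 1\<bar> > \<bar>b^n - 1\<bar>" using A B C qq q6 by linarith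
    then show "\<bar>Qeig q d 1 i\<bar> > \<bar>Qeig q d 1 (i + 1)\<bar>"
      unfolding Qi Qi1 using qp by (simp add: divide_strict_right_mono)
  }
  {
    fix i assume i: "1 \<le> i \<and> i \<le> d"
    have Q: "Qeig q d 1 i = (b^(2*d-i) - 1) / (real q + 1)"
      using Qclosed[of q i d] i assms by (simp add: b_def)
    have sQ: "sgn (Qeig q d 1 i) = sgn (b^(2*d-i))"
    proof -
      have m1: "2*d - i \<ge> 1" using i by linarith
      show ?thesis unfolding Q sgn_divide using qp sgn_m1[OF ab m1] by simp
    qed
    show "sgn (Qeig q d 1 i) = sgn (Tsum q d (min 1 (d - i)) i 1)"
    proof (cases "i = d")
      case True
      then show ?thesis using Q T0closed[of q d] assms by (simp add: b_def)
    next
      case False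
      then have di: "d - i \<ge> 1" using i by linarith
      then have m: "min 1 (d - i) = 1" by (simp add: min_def)
      have "sgn (Tsum q d 1 i 1) = sgn (b^d) * sgn (b^(d-i))"
        using T1closed[of q i d] False i assms qp sgn_m1[OF ab di]
        by (simp add: b_def[symmetric] sgn_divide sgn_mult)
      also have "\<dots> = sgn (b^(2*d-i))"
        using i by (metis add_diff_assoc mult_2 power_add sgn_mult)
      finally show ?thesis using sQ m by simp
    qed
  }
qed

end
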